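(* Let $A>0$ and let $\tilde n,\tilde m$ be probability measures on $\mathbb R$ with finite fourth moment such that $\int y\,\tilde n(dy)=\int y\,\tilde m(dy)$. Then \[W_4\big(T(\tilde n),T(\tilde m)\big)\leq\frac{1}{2^{1/4}}\,W_4(\tilde n,\tilde m).\]
   Context: $\Gamma_{A/2}(y):=\frac{1}{\sqrt{2\pi A}}e^{-|y|^2/A}$ (Gaussian density of variance $A/2$). For a probability measure $\tilde n$ on $\mathbb R$, $T(\tilde n)$ is the probability density \[T(\tilde n)(y):=\int\!\!\int\Gamma_{A/2}\Big(y-\frac{y_*+y_*'}{2}\Big)\,\tilde n(dy_* )\,\tilde n(dy_*').\] $W_4$ is the Wasserstein distance of order 4: $W_4(\mu,\nu)=\big(\inf_\pi\int|x-y|^4\,d\pi(x,y)\big)^{1/4}$, infimum over probability measures $\pi$ on $\mathbb R^2$ with marginals $\mu$ and $\nu$. *)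

theory Defs
  imports "HOL-Probability.Probability"
begin

definition gauss_half :: "real \<Rightarrow> real \<Rightarrow> real" where
  "gauss_half A y = 1 / sqrt (pi * A) * exp (- (y\<^sup>2) / A)"

definition T_op :: "real \<Rightarrow> real measure \<Rightarrow> real measure" where
  "T_op A n = density lborel
     (\<lambda>y. \<integral>\<^sup>+ a. \<integral>\<^sup>+ b. ennreal (gauss_half A (y - (a + b) / 2)) \<partial>n \<partial>n)"

definition couplings :: "real measure \<Rightarrow> real measure \<Rightarrow> (real \<times> real) measure set" where
  "couplings \<mu> \<nu> = {\<pi>. prob_space \<pi> \<and> sets \<pi> = sets (borel \<Otimes>\<^sub>M borel) \<and>
      distr \<pi> borel fst = \<mu> \<and> distr \<pi> borel snd = \<nu>}"

definition W4_cost :: "real measure \<Rightarrow> real measure \<Rightarrow> ennreal" where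
  "W4_cost \<mu> \<nu> = (INF \<pi>\<in>couplings \<mu> \<nu>. \<integral>\<^sup>+ p. ennreal ((fst p - snd p) ^ 4) \<partial>\<pi>)"

definition W4 :: "real measure \<Rightarrow> real measure \<Rightarrow> real" where
  "W4 \<mu> \<nu> = (enn2real (W4_cost \<mu> \<nu>)) powr (1/4)"

end

theory Submission
  imports Defs
begin


definition Gam :: "real \<Rightarrow> real measure" where
  "Gam A = density lborel (\<lambda>x. ennreal (gauss_half A x))"

lemma gauss_eq: "A > 0 \<Longrightarrow> gauss_half A x = normal_density 0 (sqrt (A/2)) x"
  by (simp add: gauss_half_def normal_density_def)

lemma gauss_nonneg: "A > 0 \<Longrightarrow> gauss_half A x \<ge> 0"
  by (simp add: gauss_half_def)

lemma gauss_meas[measurable]: "gauss_half A \<in> borel_measurable borel"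
  unfolding gauss_half_def by measurable

lemma sets_Gam[simp, measurable_cong]: "sets (Gam A) = sets borel"
  by (simp add: Gam_def)

lemma prob_Gam: "A > 0 \<Longrightarrow> prob_space (Gam A)"
proof -
  assume "A > 0"
  then have "(\<lambda>x. ennreal (gauss_half A x)) = (\<lambda>x. ennreal (normal_density 0 (sqrt (A/2)) x))"
    by (simp add: gauss_eq)
  then show ?thesis unfolding Gam_def by (simp add: prob_space_normal_density \<open>A>0\<close>)
qed

lemma conv_eq:
  assumes A: "A > 0" and P: "prob_space \<mu>" and Smu[measurable_cong]: "sets \<mu> = sets borel"
  shows "density lborel (\<lambda>y. \<integral>\<^sup>+c. ennreal (gauss_half A (y - c)) \<partial>\<mu>)
       = distr (\<mu> \<Otimes>\<^sub>M Gam A) borel (\<lambda>(c,g). c+g)"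
proof (rule measure_eqI)
  show "sets (density lborel (\<lambda>y. \<integral>\<^sup>+c. ennreal (gauss_half A (y - c)) \<partial>\<mu>))
       = sets (distr (\<mu> \<Otimes>\<^sub>M Gam A) borel (\<lambda>(c,g). c+g))" by simp
  fix S assume "S \<in> sets (density lborel (\<lambda>y. \<integral>\<^sup>+c. ennreal (gauss_half A (y - c)) \<partial>\<mu>))"
  then have S[measurable]: "S \<in> sets borel" by simp
  interpret G: prob_space "Gam A" by (rule prob_Gam[OF A])
  interpret M: prob_space \<mu> by fact
  interpret pair_sigma_finite lborel \<mu> by unfold_locales
  have "emeasure (distr (\<mu> \<Otimes>\<^sub>M Gam A) borel (\<lambda>(c,g). c+g)) S
      = (\<integral>\<^sup>+c. \<integral>\<^sup>+g. indicator S (c+g) \<partial>Gam A \<partial>\<mu>)"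
    using convolution_emeasure'[of S \<mu> "Gam A"] unfolding convolution_def
    using M.finite_measure_axioms G.finite_measure_axioms Smu by simp
  also have "\<dots> = (\<integral>\<^sup>+c. \<integral>\<^sup>+y. ennreal (gauss_half A (y - c)) * indicator S y \<partial>lborel \<partial>\<mu>)"
  proof (rule nn_integral_cong)
    fix c :: real
    have "(\<integral>\<^sup>+g. indicator S (c+g) \<partial>Gam A) = (\<integral>\<^sup>+g. ennreal (gauss_half A g) * indicator S (c+g) \<partial>lborel)"
      unfolding Gam_def by (simp add: nn_integral_density)
    also have "\<dots> = (\<integral>\<^sup>+y. ennreal (gauss_half A (y - c)) * indicator S y \<partial>lborel)"
      using nn_integral_real_affine[of "\<lambda>y. ennreal (gauss_half A (y - c)) * indicator S y" 1 c]
      by simp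
    finally show "(\<integral>\<^sup>+g. indicator S (c+g) \<partial>Gam A) = (\<integral>\<^sup>+y. ennreal (gauss_half A (y - c)) * indicator S y \<partial>lborel)" .
  qed
  also have "\<dots> = (\<integral>\<^sup>+y. \<integral>\<^sup>+c. ennreal (gauss_half A (y - c)) * indicator S y \<partial>\<mu> \<partial>lborel)"
  proof -
    have m: "(\<lambda>(y,c). ennreal (gauss_half A (y - c)) * indicator S y) \<in> borel_measurable (lborel \<Otimes>\<^sub>M \<mu>)"
      by measurable
    show ?thesis using Fubini'[of "\<lambda>y c. ennreal (gauss_half A (y - c)) * indicator S y", OF m] by simp
  qed
  also have "\<dots> = (\<integral>\<^sup>+y. (\<integral>\<^sup>+c. ennreal (gauss_half A (y - c)) \<partial>\<mu>) * indicator S y \<partial>lborel)"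
    by (rule nn_integral_cong, rule nn_integral_multc) measurable
  also have "\<dots> = emeasure (density lborel (\<lambda>y. \<integral>\<^sup>+c. ennreal (gauss_half A (y - c)) \<partial>\<mu>)) S"
    by (subst emeasure_density) auto
  finally show "emeasure (density lborel (\<lambda>y. \<integral>\<^sup>+c. ennreal (gauss_half A (y - c)) \<partial>\<mu>)) S
      = emeasure (distr (\<mu> \<Otimes>\<^sub>M Gam A) borel (\<lambda>(c,g). c+g)) S" by simp
qed

lemma distr_pair_map:
  assumes PM: "prob_space M" and PN: "prob_space N"
    and f[measurable]: "f \<in> measurable M S" and g[measurable]: "g \<in> measurable N T"
    and h[measurable]: "(\<lambda>(a,b). h a b) \<in> measurable (S \<Otimes>\<^sub>M T) X"
  shows "distr (M \<Otimes>\<^sub>M N) X (\<lambda>(x,y). h (f x) (g y))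
       = distr (distr M S f \<Otimes>\<^sub>M distr N T g) X (\<lambda>(a,b). h a b)"
proof -
  have "prob_space (distr N T g)" using prob_space.prob_space_distr[OF PN g] .
  then have sf: "sigma_finite_measure (distr N T g)" by (rule prob_space_imp_sigma_finite)
  have "distr (distr M S f \<Otimes>\<^sub>M distr N T g) X (\<lambda>(a,b). h a b)
      = distr (distr (M \<Otimes>\<^sub>M N) (S \<Otimes>\<^sub>M T) (\<lambda>(x, y). (f x, g y))) X (\<lambda>(a,b). h a b)"
    by (subst pair_measure_distr[OF f g sf]) simp
  also have "\<dots> = distr (M \<Otimes>\<^sub>M N) X ((\<lambda>(a,b). h a b) \<circ> (\<lambda>(x, y). (f x, g y)))"
    by (rule distr_distr) measurable
  also have "\<dots> = distr (M \<Otimes>\<^sub>M N) X (\<lambda>(x,y). h (f x) (g y))"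
    by (rule distr_cong) auto
  finally show ?thesis by simp
qed

lemma T_eq:
  assumes P: "prob_space n" and Sn[measurable_cong]: "sets n = sets borel"
  shows "T_op A n = density lborel (\<lambda>y. \<integral>\<^sup>+c. ennreal (gauss_half A (y - c))
            \<partial>(distr (n \<Otimes>\<^sub>M n) borel (\<lambda>(a,b). (a+b)/2)))"
proof -
  interpret N: prob_space n by fact
  have "\<And>y. (\<integral>\<^sup>+ a. \<integral>\<^sup>+ b. ennreal (gauss_half A (y - (a + b) / 2)) \<partial>n \<partial>n)
     = (\<integral>\<^sup>+c. ennreal (gauss_half A (y - c)) \<partial>(distr (n \<Otimes>\<^sub>M n) borel (\<lambda>(a,b). (a+b)/2)))"
  proof -
    fix y
    have "(\<integral>\<^sup>+c. ennreal (gauss_half A (y - c)) \<partial>(distr (n \<Otimes>\<^sub>M n) borel (\<lambda>(a,b). (a+b)/2)))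
        = (\<integral>\<^sup>+z. ennreal (gauss_half A (y - (fst z + snd z)/2)) \<partial>(n \<Otimes>\<^sub>M n))"
      by (subst nn_integral_distr) (auto intro!: nn_integral_cong simp: split_beta)
    also have "\<dots> = (\<integral>\<^sup>+ a. \<integral>\<^sup>+ b. ennreal (gauss_half A (y - (a + b) / 2)) \<partial>n \<partial>n)"
      by (subst N.nn_integral_fst[symmetric]) auto
    finally show "?thesis y" by simp
  qed
  then show ?thesis unfolding T_op_def by simp
qed

lemma marg:
  fixes sel :: "real \<times> real \<Rightarrow> real"
  assumes A: "A > 0" and Ppi: "prob_space \<pi>" and Spi[measurable_cong]: "sets \<pi> = sets (borel \<Otimes>\<^sub>M borel)"
    and sel[measurable]: "sel \<in> borel_measurable (borel \<Otimes>\<^sub>M borel)"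
    and D: "distr \<pi> borel sel = n" and Pn: "prob_space n" and Sn[measurable_cong]: "sets n = sets borel"
    and sel1: "\<And>a b g. sel (a+g, b+g) = sel (a,b) + g"
    and sel2: "\<And>p q. sel ((fst p+fst q)/2, (snd p+snd q)/2) = (sel p + sel q)/2"
  shows "distr (distr (distr (\<pi> \<Otimes>\<^sub>M \<pi>) (borel \<Otimes>\<^sub>M borel) (\<lambda>(p,q). ((fst p+fst q)/2, (snd p+snd q)/2))
                \<Otimes>\<^sub>M Gam A) (borel \<Otimes>\<^sub>M borel) (\<lambda>(w,g). (fst w + g, snd w + g))) borel sel = T_op A n"
    (is "distr (distr (?\<rho> \<Otimes>\<^sub>M Gam A) _ ?\<Phi>) borel sel = _")
proof -
  interpret P: prob_space \<pi> by fact
  interpret G: prob_space "Gam A" by (rule prob_Gam[OF A])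
  have Prho: "prob_space ?\<rho>" by (rule prob_space.prob_space_distr[OF prob_space_pair[OF Ppi Ppi]]) measurable
  have "distr (distr (?\<rho> \<Otimes>\<^sub>M Gam A) (borel \<Otimes>\<^sub>M borel) ?\<Phi>) borel sel
      = distr (?\<rho> \<Otimes>\<^sub>M Gam A) borel (sel \<circ> ?\<Phi>)"
    by (rule distr_distr) measurable
  also have "\<dots> = distr (?\<rho> \<Otimes>\<^sub>M Gam A) borel (\<lambda>(w,g). (\<lambda>a b. a + b) (sel w) ((\<lambda>x. x) g))"
    by (rule distr_cong) (auto simp: sel1 split_beta)
  also have "\<dots> = distr (distr ?\<rho> borel sel \<Otimes>\<^sub>M distr (Gam A) borel (\<lambda>x. x)) borel (\<lambda>(a,b). a + b)"
    by (rule distr_pair_map[OF Prho G.prob_space_axioms]) measurable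
  also have "distr (Gam A) borel (\<lambda>x. x) = Gam A" by (rule distr_id2) simp
  also have "distr ?\<rho> borel sel = distr (\<pi> \<Otimes>\<^sub>M \<pi>) borel (sel \<circ> (\<lambda>(p,q). ((fst p+fst q)/2, (snd p+snd q)/2)))"
    by (rule distr_distr) measurable
  also have "\<dots> = distr (\<pi> \<Otimes>\<^sub>M \<pi>) borel (\<lambda>(p,q). (\<lambda>a b. (a+b)/2) (sel p) (sel q))"
    by (rule distr_cong) (auto simp: sel2 split_beta)
  also have "\<dots> = distr (distr \<pi> borel sel \<Otimes>\<^sub>M distr \<pi> borel sel) borel (\<lambda>(a,b). (a+b)/2)"
    by (rule distr_pair_map[OF Ppi Ppi]) measurable
  also have "\<dots> = distr (n \<Otimes>\<^sub>M n) borel (\<lambda>(a,b). (a+b)/2)" by (simp add: D)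
  also have "distr (distr (n \<Otimes>\<^sub>M n) borel (\<lambda>(a,b). (a+b)/2) \<Otimes>\<^sub>M Gam A) borel (\<lambda>(a,b). a + b)
      = density lborel (\<lambda>y. \<integral>\<^sup>+c. ennreal (gauss_half A (y - c)) \<partial>(distr (n \<Otimes>\<^sub>M n) borel (\<lambda>(a,b). (a+b)/2)))"
  proof (rule conv_eq[symmetric, OF A])
    interpret N: prob_space n by fact
    show "prob_space (distr (n \<Otimes>\<^sub>M n) borel (\<lambda>(a,b). (a+b)/2))"
      by (rule prob_space.prob_space_distr) (auto intro: prob_space_pair N.prob_space_axioms)
  qed simp
  also have "\<dots> = T_op A n" by (rule T_eq[symmetric, OF Pn Sn])
  finally show ?thesis .
qed



lemma pow_bound: "k \<le> 4 \<Longrightarrow> \<bar>t::real\<bar>^k \<le> 1 + t^4"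
proof (cases "\<bar>t\<bar> \<le> 1")
  case True
  assume "k \<le> 4"
  have "\<bar>t\<bar>^k \<le> 1" using True by (simp add: power_le_one)
  moreover have "t^4 \<ge> 0" by simp
  ultimately show ?thesis by linarith
next
  case False
  assume k: "k \<le> 4"
  have "\<bar>t\<bar>^k \<le> \<bar>t\<bar>^4" using False k by (intro power_increasing) auto
  also have "\<dots> = t^4" by (simp add: power_even_abs)
  finally show ?thesis by simp
qed

lemma integ_pow:
  assumes "prob_space M" and f[measurable]: "f \<in> borel_measurable M"
    and I: "integrable M (\<lambda>x. f x ^ 4)" and k: "k \<le> 4"
  shows "integrable M (\<lambda>x. (f x :: real) ^ k)"
proof (rule Bochner_Integration.integrable_bound[where f="\<lambda>x. 1 + f x ^ 4"])
  interpret prob_space M by fact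
  show "integrable M (\<lambda>x. 1 + f x ^ 4)" using I by simp
  show "(\<lambda>x. f x ^ k) \<in> borel_measurable M" by measurable
  show "AE x in M. norm (f x ^ k) \<le> norm (1 + f x ^ 4)"
    using pow_bound[OF k] by (auto simp: power_abs)
qed

lemma expand4: "((a + d)/2)^4 = a^4/16 + (a^3/4) * d^1 + (3*a^2/8) * d^2 + (a/4) * d^3 + (1/16) * (d::real)^4"
  by (simp add: eval_nat_numeral field_simps)

lemma cost_main:
  fixes \<pi> :: "(real \<times> real) measure"
  assumes Ppi: "prob_space \<pi>" and Spi[measurable_cong]: "sets \<pi> = sets (borel \<Otimes>\<^sub>M borel)"
    and I4: "integrable \<pi> (\<lambda>p. (fst p - snd p)^4)"
    and E1: "(\<integral>p. fst p - snd p \<partial>\<pi>) = 0"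
  shows "ennreal 2 * (\<integral>\<^sup>+p. \<integral>\<^sup>+q. ennreal (((fst p - snd p + (fst q - snd q))/2)^4) \<partial>\<pi> \<partial>\<pi>)
     \<le> (\<integral>\<^sup>+p. ennreal ((fst p - snd p)^4) \<partial>\<pi>)"
proof -
  interpret P: prob_space \<pi> by fact
  define D where "D p = fst p - snd p" for p :: "real \<times> real"
  have Dm[measurable]: "D \<in> borel_measurable \<pi>" unfolding D_def by measurable
  have I: "integrable \<pi> (\<lambda>p. D p ^ k)" if "k \<le> 4" for k
    using integ_pow[OF Ppi Dm _ that] I4 unfolding D_def by simp
  note I1 = I[of 1, simplified] and I2 = I[of 2, simplified] and I3 = I[of 3, simplified] and I4' = I[of 4, simplified]
  define E2 where "E2 = (\<integral>p. D p ^ 2 \<partial>\<pi>)"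
  define E3 where "E3 = (\<integral>p. D p ^ 3 \<partial>\<pi>)"
  define E4 where "E4 = (\<integral>p. D p ^ 4 \<partial>\<pi>)"
  have E1': "(\<integral>p. D p \<partial>\<pi>) = 0" using E1 unfolding D_def .
  define Q where "Q a = a^4/16 + 3*a^2/8*E2 + a/4*E3 + E4/16" for a :: real
  have Iq: "integrable \<pi> (\<lambda>q. ((a + D q)/2)^4)" for a
    unfolding expand4 using I1 I2 I3 I4' by simp
  have inner: "(\<integral>q. ((a + D q)/2)^4 \<partial>\<pi>) = Q a" for a
    unfolding expand4 Q_def E2_def E3_def E4_def using I1 I2 I3 I4' E1' by (simp add: P.prob_space)
  have Qnn: "Q a \<ge> 0" for a
    unfolding inner[symmetric] by (rule integral_nonneg_AE) simp
  have step1: "(\<integral>\<^sup>+q. ennreal (((D p + D q)/2)^4) \<partial>\<pi>) = ennreal (Q (D p))" for p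
    by (subst nn_integral_eq_integral) (auto simp: Iq inner)
  have IQ: "integrable \<pi> (\<lambda>p. Q (D p))"
    unfolding Q_def using I1 I2 I3 I4' by simp
  have intQ: "(\<integral>p. Q (D p) \<partial>\<pi>) = E4/8 + 3/8 * E2 * E2"
    unfolding Q_def using I1 I2 I3 I4' E1' by (simp add: E2_def E4_def P.prob_space)
  have "0 \<le> (\<integral>p. (D p ^ 2 - E2)^2 \<partial>\<pi>)" by (rule integral_nonneg_AE) simp
  also have "(\<integral>p. (D p ^ 2 - E2)^2 \<partial>\<pi>) = (\<integral>p. D p ^ 4 - 2 * E2 * D p ^ 2 + E2^2 \<partial>\<pi>)"
    by (rule Bochner_Integration.integral_cong) (simp_all add: power2_eq_square eval_nat_numeral algebra_simps)
  also have "\<dots> = E4 - E2 * E2"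
    using I2 I4' by (simp add: E2_def E4_def power2_eq_square P.prob_space)
  finally have CS: "E2 * E2 \<le> E4" by simp
  have "(\<integral>\<^sup>+p. \<integral>\<^sup>+q. ennreal (((fst p - snd p + (fst q - snd q))/2)^4) \<partial>\<pi> \<partial>\<pi>)
      = (\<integral>\<^sup>+p. ennreal (Q (D p)) \<partial>\<pi>)"
    using step1 by (simp add: D_def)
  also have "\<dots> = ennreal (E4/8 + 3/8 * E2 * E2)"
    by (subst nn_integral_eq_integral) (auto simp: IQ intQ Qnn)
  finally have L: "(\<integral>\<^sup>+p. \<integral>\<^sup>+q. ennreal (((fst p - snd p + (fst q - snd q))/2)^4) \<partial>\<pi> \<partial>\<pi>) = ennreal (E4/8 + 3/8 * E2 * E2)" .
  have R: "(\<integral>\<^sup>+p. ennreal ((fst p - snd p)^4) \<partial>\<pi>) = ennreal E4"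
    unfolding E4_def using I4' by (subst nn_integral_eq_integral) (auto simp: D_def)
  have E4nn: "E4 \<ge> 0" unfolding E4_def by (rule integral_nonneg_AE) simp
  have E2nn: "E2 \<ge> 0" unfolding E2_def by (rule integral_nonneg_AE) simp
  have "ennreal 2 * ennreal (E4/8 + 3/8 * E2 * E2) = ennreal (2 * (E4/8 + 3/8 * E2 * E2))"
    using E4nn E2nn by (intro ennreal_mult[symmetric]) auto
  also have "\<dots> \<le> ennreal E4" using CS E2nn by (intro ennreal_leI) simp
  finally show ?thesis unfolding L R .
qed


lemma quart_bound: "((a::real) - b)^4 \<le> 8 * (a^4 + b^4)"
proof -
  have h1: "(a - b)^2 \<le> 2 * (a^2 + b^2)" using zero_le_power2[of "a+b"]
    by (simp add: power2_eq_square algebra_simps)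
  have "(a - b)^4 = ((a-b)^2)^2" by simp
  also have "\<dots> \<le> (2 * (a^2 + b^2))^2" using h1 by (intro power_mono) auto
  also have "\<dots> \<le> 8 * (a^4 + b^4)" using zero_le_power2[of "a^2-b^2"]
    by (simp add: power2_eq_square algebra_simps eval_nat_numeral)
  finally show ?thesis .
qed

lemma coupling_moments:
  assumes C: "\<pi> \<in> couplings n m"
    and In: "integrable n (\<lambda>y. y ^ 4)" and Im: "integrable m (\<lambda>y. y ^ 4)"
  shows "integrable \<pi> (\<lambda>p. (fst p - snd p)^4)"
    and "integrable \<pi> fst" and "integrable \<pi> snd"
    and "(\<integral>p. fst p \<partial>\<pi>) = (\<integral>y. y \<partial>n)" and "(\<integral>p. snd p \<partial>\<pi>) = (\<integral>y. y \<partial>m)"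
proof -
  have Ppi: "prob_space \<pi>" and Spi[measurable_cong]: "sets \<pi> = sets (borel \<Otimes>\<^sub>M borel)"
    and D1: "distr \<pi> borel fst = n" and D2: "distr \<pi> borel snd = m"
    using C unfolding couplings_def by auto
  interpret P: prob_space \<pi> by fact
  have F4: "integrable \<pi> (\<lambda>p. fst p ^ 4)"
    using In unfolding D1[symmetric] by (subst (asm) integrable_distr_eq) auto
  have S4: "integrable \<pi> (\<lambda>p. snd p ^ 4)"
    using Im unfolding D2[symmetric] by (subst (asm) integrable_distr_eq) auto
  show "integrable \<pi> (\<lambda>p. (fst p - snd p)^4)"
  proof (rule Bochner_Integration.integrable_bound[where f="\<lambda>p. 8 * (fst p ^ 4 + snd p ^ 4)"])
    show "integrable \<pi> (\<lambda>p. 8 * (fst p ^ 4 + snd p ^ 4))" using F4 S4 by simp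
    show "(\<lambda>p. (fst p - snd p)^4) \<in> borel_measurable \<pi>" by measurable
    show "AE x in \<pi>. norm ((fst x - snd x)^4) \<le> norm (8 * (fst x ^ 4 + snd x ^ 4))"
      using quart_bound by (auto simp: abs_of_nonneg add_nonneg_nonneg)
  qed
  show "integrable \<pi> fst" using integ_pow[OF Ppi _ F4, of 1] by simp
  show "integrable \<pi> snd" using integ_pow[OF Ppi _ S4, of 1] by simp
  show "(\<integral>p. fst p \<partial>\<pi>) = (\<integral>y. y \<partial>n)"
    unfolding D1[symmetric] by (subst integral_distr) auto
  show "(\<integral>p. snd p \<partial>\<pi>) = (\<integral>y. y \<partial>m)"
    unfolding D2[symmetric] by (subst integral_distr) auto
qed

lemma coupling_cost:
  assumes A: "A > 0"
    and Pn: "prob_space n" and Sn: "sets n = sets borel"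
    and Pm: "prob_space m" and Sm: "sets m = sets borel"
    and In: "integrable n (\<lambda>y. y ^ 4)"
    and Im: "integrable m (\<lambda>y. y ^ 4)"
    and mean: "(\<integral>y. y \<partial>n) = (\<integral>y. y \<partial>m)"
    and C: "\<pi> \<in> couplings n m"
  shows "ennreal 2 * W4_cost (T_op A n) (T_op A m) \<le> (\<integral>\<^sup>+p. ennreal ((fst p - snd p)^4) \<partial>\<pi>)"
proof -
  have Ppi: "prob_space \<pi>" and Spi[measurable_cong]: "sets \<pi> = sets (borel \<Otimes>\<^sub>M borel)"
    and D1: "distr \<pi> borel fst = n" and D2: "distr \<pi> borel snd = m"
    using C unfolding couplings_def by auto
  interpret P: prob_space \<pi> by fact
  interpret G: prob_space "Gam A" by (rule prob_Gam[OF A])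
  interpret PP: pair_sigma_finite \<pi> \<pi> by unfold_locales
  define \<rho> where "\<rho> = distr (\<pi> \<Otimes>\<^sub>M \<pi>) (borel \<Otimes>\<^sub>M borel) (\<lambda>(p,q). ((fst p+fst q)/2, (snd p+snd q)/2))"
  define \<pi>' where "\<pi>' = distr (\<rho> \<Otimes>\<^sub>M Gam A) (borel \<Otimes>\<^sub>M borel) (\<lambda>(w,g). (fst w + g, snd w + g))"
  have Srho[measurable_cong]: "sets \<rho> = sets (borel \<Otimes>\<^sub>M borel)" unfolding \<rho>_def by simp
  have Prho: "prob_space \<rho>" unfolding \<rho>_def
    by (rule prob_space.prob_space_distr[OF prob_space_pair[OF Ppi Ppi]]) measurable
  interpret R: prob_space \<rho> by fact
  have "\<pi>' \<in> couplings (T_op A n) (T_op A m)"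
    unfolding couplings_def
  proof (intro CollectI conjI)
    show "prob_space \<pi>'" unfolding \<pi>'_def
      by (rule prob_space.prob_space_distr[OF prob_space_pair[OF Prho G.prob_space_axioms]]) measurable
    show "sets \<pi>' = sets (borel \<Otimes>\<^sub>M borel)" unfolding \<pi>'_def by simp
    show "distr \<pi>' borel fst = T_op A n"
      unfolding \<pi>'_def \<rho>_def by (rule marg[OF A Ppi Spi _ D1 Pn Sn]) auto
    show "distr \<pi>' borel snd = T_op A m"
      unfolding \<pi>'_def \<rho>_def by (rule marg[OF A Ppi Spi _ D2 Pm Sm]) auto
  qed
  then have W: "W4_cost (T_op A n) (T_op A m) \<le> (\<integral>\<^sup>+p. ennreal ((fst p - snd p)^4) \<partial>\<pi>')"
    unfolding W4_cost_def by (rule INF_lower)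
  have "(\<integral>\<^sup>+p. ennreal ((fst p - snd p)^4) \<partial>\<pi>')
      = (\<integral>\<^sup>+z. ennreal ((fst (fst z) - snd (fst z))^4) \<partial>(\<rho> \<Otimes>\<^sub>M Gam A))"
    unfolding \<pi>'_def by (subst nn_integral_distr) (auto intro!: nn_integral_cong simp: split_beta)
  also have "\<dots> = (\<integral>\<^sup>+w. \<integral>\<^sup>+g. ennreal ((fst w - snd w)^4) \<partial>Gam A \<partial>\<rho>)"
    by (subst G.nn_integral_fst[symmetric]) auto
  also have "\<dots> = (\<integral>\<^sup>+w. ennreal ((fst w - snd w)^4) \<partial>\<rho>)"
    by (simp add: G.emeasure_space_1)
  also have "\<dots> = (\<integral>\<^sup>+z. ennreal (((fst (fst z) - snd (fst z) + (fst (snd z) - snd (snd z)))/2)^4) \<partial>(\<pi> \<Otimes>\<^sub>M \<pi>))"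
    unfolding \<rho>_def by (subst nn_integral_distr) (auto intro!: nn_integral_cong simp: split_beta diff_divide_distrib add_divide_distrib algebra_simps)
  also have "\<dots> = (\<integral>\<^sup>+p. \<integral>\<^sup>+q. ennreal (((fst p - snd p + (fst q - snd q))/2)^4) \<partial>\<pi> \<partial>\<pi>)"
    by (subst P.nn_integral_fst[symmetric]) auto
  finally have eq: "(\<integral>\<^sup>+p. ennreal ((fst p - snd p)^4) \<partial>\<pi>') = (\<integral>\<^sup>+p. \<integral>\<^sup>+q. ennreal (((fst p - snd p + (fst q - snd q))/2)^4) \<partial>\<pi> \<partial>\<pi>)" .
  have E1: "(\<integral>p. fst p - snd p \<partial>\<pi>) = 0"
    using coupling_moments[OF C In Im] mean by simp
  have "ennreal 2 * W4_cost (T_op A n) (T_op A m) \<le> ennreal 2 * (\<integral>\<^sup>+p. ennreal ((fst p - snd p)^4) \<partial>\<pi>')"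
    using W by (rule mult_left_mono) simp
  also have "\<dots> \<le> (\<integral>\<^sup>+p. ennreal ((fst p - snd p)^4) \<partial>\<pi>)"
    unfolding eq by (rule cost_main[OF Ppi Spi coupling_moments(1)[OF C In Im] E1])
  finally show ?thesis .
qed

lemma prod_coupling:
  assumes Pn: "prob_space n" and Sn[measurable_cong]: "sets n = sets borel"
    and Pm: "prob_space m" and Sm[measurable_cong]: "sets m = sets borel"
  shows "n \<Otimes>\<^sub>M m \<in> couplings n m"
  unfolding couplings_def
proof (intro CollectI conjI)
  interpret N: prob_space n by fact
  interpret M: prob_space m by fact
  interpret NM: pair_sigma_finite n m by unfold_locales
  show "prob_space (n \<Otimes>\<^sub>M m)" by (rule prob_space_pair[OF Pn Pm])
  show "sets (n \<Otimes>\<^sub>M m) = sets (borel \<Otimes>\<^sub>M borel)" by (rule sets_pair_measure_cong[OF Sn Sm])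
  show "distr (n \<Otimes>\<^sub>M m) borel fst = n"
  proof (rule measure_eqI)
    fix S assume "S \<in> sets (distr (n \<Otimes>\<^sub>M m) borel fst)"
    then have S: "S \<in> sets borel" by simp
    have "emeasure (distr (n \<Otimes>\<^sub>M m) borel fst) S = emeasure (n \<Otimes>\<^sub>M m) (S \<times> space m)"
      using S by (subst emeasure_distr) (auto simp: space_pair_measure Sn sets_eq_imp_space_eq[OF Sn] intro!: arg_cong2[where f=emeasure] dest: sets.sets_into_space)
    also have "\<dots> = emeasure n S" using S Sn
      by (subst M.emeasure_pair_measure_Times) (auto simp: M.emeasure_space_1)
    finally show "emeasure (distr (n \<Otimes>\<^sub>M m) borel fst) S = emeasure n S" .
  qed (simp add: Sn)
  show "distr (n \<Otimes>\<^sub>M m) borel snd = m"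
  proof (rule measure_eqI)
    fix S assume "S \<in> sets (distr (n \<Otimes>\<^sub>M m) borel snd)"
    then have S: "S \<in> sets borel" by simp
    have "emeasure (distr (n \<Otimes>\<^sub>M m) borel snd) S = emeasure (n \<Otimes>\<^sub>M m) (space n \<times> S)"
      using S by (subst emeasure_distr) (auto simp: space_pair_measure Sm sets_eq_imp_space_eq[OF Sm] intro!: arg_cong2[where f=emeasure] dest: sets.sets_into_space)
    also have "\<dots> = emeasure m S" using S Sm
      by (subst M.emeasure_pair_measure_Times) (auto simp: N.emeasure_space_1)
    finally show "emeasure (distr (n \<Otimes>\<^sub>M m) borel snd) S = emeasure m S" .
  qed (simp add: Sm)
qed

theorem corollary1:
  fixes A :: real and n m :: "real measure"
  assumes "A > 0"
    and "prob_space n" and "sets n = sets borel"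
    and "prob_space m" and "sets m = sets borel"
    and "integrable n (\<lambda>y. y ^ 4)"
    and "integrable m (\<lambda>y. y ^ 4)"
    and "(\<integral>y. y \<partial>n) = (\<integral>y. y \<partial>m)"
  shows "W4 (T_op A n) (T_op A m) \<le> 1 / 2 powr (1/4) * W4 n m"
proof -
  define a where "a = W4_cost n m"
  define b where "b = W4_cost (T_op A n) (T_op A m)"
  have C0: "n \<Otimes>\<^sub>M m \<in> couplings n m" using prod_coupling assms by blast
  interpret NM: prob_space "n \<Otimes>\<^sub>M m" using C0 unfolding couplings_def by auto
  have "a \<le> (\<integral>\<^sup>+p. ennreal ((fst p - snd p)^4) \<partial>(n \<Otimes>\<^sub>M m))"
    unfolding a_def W4_cost_def using C0 by (rule INF_lower)
  also have "\<dots> = ennreal (\<integral>p. (fst p - snd p)^4 \<partial>(n \<Otimes>\<^sub>M m))"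
    using coupling_moments(1)[OF C0 assms(6,7)] by (subst nn_integral_eq_integral) auto
  also have "\<dots> < \<top>" by simp
  finally have afin: "a < \<top>" .
  have ab: "ennreal 2 * b \<le> a"
    unfolding a_def b_def W4_cost_def[of n m]
    by (intro INF_greatest coupling_cost[OF assms])
  have "b \<le> ennreal 2 * b" by (simp add: mult_2 )
  with ab afin have bfin: "b < \<top>" by (meson order.trans order_le_less_trans)
  have "enn2real (ennreal 2 * b) \<le> enn2real a" using ab afin by (rule enn2real_mono)
  then have r: "2 * enn2real b \<le> enn2real a" by (simp add: enn2real_mult)
  have "W4 (T_op A n) (T_op A m) = enn2real b powr (1/4)" unfolding W4_def b_def ..
  also have "\<dots> \<le> (enn2real a / 2) powr (1/4)" using r by (intro powr_mono2) auto
  also have "\<dots> = enn2real a powr (1/4) / 2 powr (1/4)" by (rule powr_divide)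
  also have "\<dots> = 1 / 2 powr (1/4) * W4 n m" unfolding W4_def a_def by simp
  finally show ?thesis .
qed

end
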